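(* For $q^ip^j\in\mathcal{C}(p,q)$ and $n\in\omega$ let $U_n(q^ip^j)=\{q^ip^j\}\cup\{q^sp^t: s,t\ge n\}$, and let $\tau_1$ be the topology on $\mathcal{C}(p,q)$ generated by the neighbourhood bases $\{U_n(q^ip^j):n\in\omega\}$ at each point $q^ip^j$. Then $(\mathcal{C}(p,q),\tau_1)$ is a $T_1$ topological inverse semigroup (semigroup operation jointly continuous and inversion continuous).
   Context: The bicyclic monoid $\mathcal{C}(p,q)$ is the monoid generated by $p,q$ subject only to $pq=1$; elements are uniquely $q^ip^j$, $i,j\in\omega$, with multiplication $q^kp^l\cdot q^mp^n = q^{k-l+m}p^n$ if $l<m$, $=q^kp^n$ if $l=m$, $=q^kp^{l-m+n}$ if $l>m$, and inversion $(q^ip^j)^{-1}=q^jp^i$. *)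

theory Defs
  imports "HOL-Analysis.Analysis"
begin

text \<open>The bicyclic monoid C(p,q): the element q^i p^j is represented by the pair (i,j).\<close>

type_synonym bicyclic = "nat \<times> nat"

definition bic_mult :: "bicyclic \<Rightarrow> bicyclic \<Rightarrow> bicyclic" where
  "bic_mult x y = (case x of (k,l) \<Rightarrow> case y of (m,n) \<Rightarrow>
     if l < m then (k + m - l, n)
     else if l = m then (k, n)
     else (k, l + n - m))"

definition bic_inv :: "bicyclic \<Rightarrow> bicyclic" where
  "bic_inv x = (case x of (i,j) \<Rightarrow> (j,i))"

definition U_nbhd :: "nat \<Rightarrow> bicyclic \<Rightarrow> bicyclic set" where
  "U_nbhd n x = {x} \<union> {(s,t). s \<ge> n \<and> t \<ge> n}"

definition tau1 :: "bicyclic topology" where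
  "tau1 = topology (\<lambda>S. \<forall>x\<in>S. \<exists>n. U_nbhd n x \<subseteq> S)"

end

theory Submission
  imports Defs
begin

lemma U_mono: "n \<le> m \<Longrightarrow> U_nbhd m x \<subseteq> U_nbhd n x"
  unfolding U_nbhd_def by auto

lemma x_in_U: "x \<in> U_nbhd n x"
  unfolding U_nbhd_def by auto

lemma istop: "istopology (\<lambda>S. \<forall>x\<in>S. \<exists>n. U_nbhd n x \<subseteq> S)"
  unfolding istopology_def
proof (intro conjI allI impI)
  fix S T assume a1: "\<forall>x\<in>S. \<exists>n. U_nbhd n x \<subseteq> S" and a2: "\<forall>x\<in>T. \<exists>n. U_nbhd n x \<subseteq> T"
  show "\<forall>x\<in>S \<inter> T. \<exists>n. U_nbhd n x \<subseteq> S \<inter> T"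
  proof
    fix x assume "x \<in> S \<inter> T"
    then obtain n m where "U_nbhd n x \<subseteq> S" "U_nbhd m x \<subseteq> T" using a1 a2 by blast
    then have "U_nbhd (max n m) x \<subseteq> S \<inter> T"
      using U_mono[of n "max n m" x] U_mono[of m "max n m" x] by auto
    then show "\<exists>n. U_nbhd n x \<subseteq> S \<inter> T" by blast
  qed
next
  fix K :: "bicyclic set set" assume a: "\<forall>S\<in>K. \<forall>x\<in>S. \<exists>n. U_nbhd n x \<subseteq> S"
  show "\<forall>x\<in>\<Union> K. \<exists>n. U_nbhd n x \<subseteq> \<Union> K"
  proof
    fix x assume "x \<in> \<Union> K"
    then obtain S where "S \<in> K" "x \<in> S" by blast
    then obtain n where "U_nbhd n x \<subseteq> S" using a by blast
    then show "\<exists>n. U_nbhd n x \<subseteq> \<Union> K" using \<open>S \<in> K\<close> by blast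
  qed
qed

lemma open_tau1: "openin tau1 S \<longleftrightarrow> (\<forall>x\<in>S. \<exists>n. U_nbhd n x \<subseteq> S)"
  unfolding tau1_def using istop by (simp add: topology_inverse')

lemma top_tau1: "topspace tau1 = UNIV"
  unfolding topspace_def open_tau1 by (auto simp: U_nbhd_def)

lemma U_open: "openin tau1 (U_nbhd n x)"
  unfolding open_tau1
proof
  fix z assume "z \<in> U_nbhd n x"
  then have "U_nbhd n z \<subseteq> U_nbhd n x" unfolding U_nbhd_def by auto
  then show "\<exists>m. U_nbhd m z \<subseteq> U_nbhd n x" by blast
qed

lemma mult_U:
  assumes "m = n + fst a + snd a + fst b + snd b + 1"
    and "u \<in> U_nbhd m a" and "v \<in> U_nbhd m b"
  shows "bic_mult u v \<in> U_nbhd n (bic_mult a b)"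
proof -
  obtain a1 a2 b1 b2 u1 u2 v1 v2 where e: "a = (a1,a2)" "b = (b1,b2)" "u = (u1,u2)" "v = (v1,v2)"
    by (cases a, cases b, cases u, cases v) auto
  have hu: "u = a \<or> (u1 \<ge> m \<and> u2 \<ge> m)" using assms(2) e unfolding U_nbhd_def by auto
  have hv: "v = b \<or> (v1 \<ge> m \<and> v2 \<ge> m)" using assms(3) e unfolding U_nbhd_def by auto
  have m: "m = n + a1 + a2 + b1 + b2 + 1" using assms(1) e by simp
  show ?thesis
  proof (cases "u = a")
    case True
    then show ?thesis
    proof (cases "v = b")
      case True
      then show ?thesis using \<open>u = a\<close> by (simp add: U_nbhd_def)
    next
      case False
      then have "v1 \<ge> m" "v2 \<ge> m" using hv by auto
      then show ?thesis using \<open>u = a\<close> e m unfolding U_nbhd_def bic_mult_def by auto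
    qed
  next
    case False
    then have "u1 \<ge> m" "u2 \<ge> m" using hu by auto
    then show ?thesis
    proof (cases "v = b")
      case True
      then show ?thesis using \<open>u1 \<ge> m\<close> \<open>u2 \<ge> m\<close> e m unfolding U_nbhd_def bic_mult_def by auto
    next
      case False
      then have "v1 \<ge> m" "v2 \<ge> m" using hv by auto
      then show ?thesis using \<open>u1 \<ge> m\<close> \<open>u2 \<ge> m\<close> e m unfolding U_nbhd_def bic_mult_def by auto
    qed
  qed
qed

theorem proposition1:
  shows "t1_space tau1
    \<and> continuous_map (prod_topology tau1 tau1) tau1 (\<lambda>(x, y). bic_mult x y)
    \<and> continuous_map tau1 tau1 bic_inv"
proof (intro conjI)
  show "t1_space tau1"
    unfolding t1_space_def top_tau1
  proof (intro ballI impI)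
    fix x y :: bicyclic assume "x \<noteq> y"
    have "y \<notin> U_nbhd (Suc (fst y)) x" using \<open>x \<noteq> y\<close> unfolding U_nbhd_def by auto
    then show "\<exists>U. openin tau1 U \<and> x \<in> U \<and> y \<notin> U" using U_open x_in_U by blast
  qed
next
  show "continuous_map (prod_topology tau1 tau1) tau1 (\<lambda>(x, y). bic_mult x y)"
    unfolding continuous_map_def
  proof (intro conjI allI impI)
    show "(\<lambda>(x, y). bic_mult x y) \<in> topspace (prod_topology tau1 tau1) \<rightarrow> topspace tau1"
      by (simp add: top_tau1)
    fix W assume W: "openin tau1 W"
    show "openin (prod_topology tau1 tau1)
          {x \<in> topspace (prod_topology tau1 tau1). (case x of (x, y) \<Rightarrow> bic_mult x y) \<in> W}"
      unfolding openin_prod_topology_alt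
    proof (intro allI impI)
      fix a b assume "(a, b) \<in> {x \<in> topspace (prod_topology tau1 tau1). (case x of (x, y) \<Rightarrow> bic_mult x y) \<in> W}"
      then have "bic_mult a b \<in> W" by simp
      then obtain n where n: "U_nbhd n (bic_mult a b) \<subseteq> W" using W open_tau1 by blast
      define m where "m = n + fst a + snd a + fst b + snd b + 1"
      have S: "U_nbhd m a \<times> U_nbhd m b \<subseteq> {x \<in> topspace (prod_topology tau1 tau1). (case x of (x, y) \<Rightarrow> bic_mult x y) \<in> W}"
      proof
        fix z assume "z \<in> U_nbhd m a \<times> U_nbhd m b"
        then obtain u v where z: "z = (u, v)" "u \<in> U_nbhd m a" "v \<in> U_nbhd m b" by blast
        then have "bic_mult u v \<in> W" using mult_U[OF m_def] n by blast
        then show "z \<in> {x \<in> topspace (prod_topology tau1 tau1). (case x of (x, y) \<Rightarrow> bic_mult x y) \<in> W}"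
          using z(1) by (simp add: top_tau1)
      qed
      then show "\<exists>U V. openin tau1 U \<and> openin tau1 V \<and> a \<in> U \<and> b \<in> V \<and> U \<times> V \<subseteq> {x \<in> topspace (prod_topology tau1 tau1). (case x of (x, y) \<Rightarrow> bic_mult x y) \<in> W}"
        using U_open[of m a] U_open[of m b] x_in_U[of a m] x_in_U[of b m] S by blast
    qed
  qed
next
  show "continuous_map tau1 tau1 bic_inv"
    unfolding continuous_map_def
  proof (intro conjI allI impI)
    show "bic_inv \<in> topspace tau1 \<rightarrow> topspace tau1" by (simp add: top_tau1)
    fix W assume W: "openin tau1 W"
    show "openin tau1 {x \<in> topspace tau1. bic_inv x \<in> W}"
      unfolding open_tau1
    proof
      fix x assume "x \<in> {x \<in> topspace tau1. bic_inv x \<in> W}"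
      then obtain n where n: "U_nbhd n (bic_inv x) \<subseteq> W" using W open_tau1 by blast
      have "U_nbhd n x \<subseteq> {x \<in> topspace tau1. bic_inv x \<in> W}"
        using n by (cases x) (auto simp: top_tau1 U_nbhd_def bic_inv_def split: prod.splits)
      then show "\<exists>n. U_nbhd n x \<subseteq> {x \<in> topspace tau1. bic_inv x \<in> W}" by blast
    qed
  qed
qed

end
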